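(* Let $\alpha$ be an ordinal and let $\mathcal{X},\mathcal{Y}$ be families of metric spaces. If $F\colon\mathcal{X}\to\mathcal{Y}$ is a coarse embedding and $\mathcal{Y}\in\mathfrak{C}_\alpha$, then $\mathcal{X}\in\mathfrak{C}_\alpha$.
   Context: A family $\mathcal{U}$ of metric subspaces of a metric space $(X,d)$ is $r$-disjoint if $d(x,y)>r$ whenever $x\in U$, $y\in U'$, $U\neq U'$ in $\mathcal{U}$. For families $\mathcal{X},\mathcal{Y}$ and $R\in\mathbb{R}^{\mathbb{N}}$, $\mathcal{X}\xrightarrow{R}\mathcal{Y}$ means: there is an integer $k$ such that for each $X\in\mathcal{X}$ there are subcollections $\mathcal{U}_1,\dots,\mathcal{U}_k\subseteq\mathcal{Y}$ of subspaces of $X$, each $\mathcal{U}_i$ being $R_i$-disjoint, with $\bigcup_i\mathcal{U}_i$ covering $X$. A family is bounded if the diameters of its members are uniformly bounded. $\mathfrak{C}_0$ is the class of bounded families; for an ordinal $\alpha>0$, $\mathfrak{C}_\alpha$ is the class of families $\mathcal{X}$ such that for every $R\in\mathbb{R}^{\mathbb{N}}$ there exist $\beta<\alpha$ and $\mathcal{Y}\in\mathfrak{C}_\beta$ with $\mathcal{X}\xrightarrow{R}\mathcal{Y}$. A map $F\colon\mathcal{X}\to\mathcal{Y}$ of families is a collection of maps $f\colon X_f\to Y_f$ with $\{X_f\}_{f\in F}=\mathcal{X}$ and $Y_f\in\mathcal{Y}$. It is a coarse embedding if there are non-decreasing $\rho_1,\rho_2\colon[0,\infty)\to[0,\infty)$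 with $\rho_1$ proper such that $\rho_1(d(x,x'))\le d(f(x),f(x'))\le\rho_2(d(x,x'))$ for all $f\in F$ and $x,x'\in X_f$. *)

theory Defs
  imports "HOL-Analysis.Analysis"
begin

definition is_subspace :: "'a metric \<Rightarrow> 'a metric \<Rightarrow> bool" where
  "is_subspace U X \<longleftrightarrow> (\<exists>S. S \<subseteq> mspace X \<and> U = submetric X S)"

text \<open>A family of subspaces of X is r-disjoint (distances measured in X).\<close>
definition r_disjoint :: "'a metric \<Rightarrow> 'a metric set \<Rightarrow> real \<Rightarrow> bool" where
  "r_disjoint X \<U> r \<longleftrightarrow>
     (\<forall>U\<in>\<U>. \<forall>U'\<in>\<U>. U \<noteq> U' \<longrightarrow>
        (\<forall>x\<in>mspace U. \<forall>y\<in>mspace U'. mdist X x y > r))"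

text \<open>The relation X --R--> Y (R indexed from 1).\<close>
definition fam_arrow :: "'a metric set \<Rightarrow> (nat \<Rightarrow> real) \<Rightarrow> 'a metric set \<Rightarrow> bool" where
  "fam_arrow \<X> R \<Y> \<longleftrightarrow>
     (\<exists>k::nat. \<forall>X\<in>\<X>. \<exists>\<U> :: nat \<Rightarrow> 'a metric set.
        (\<forall>i\<in>{1..k}. \<U> i \<subseteq> \<Y> \<and> (\<forall>U\<in>\<U> i. is_subspace U X) \<and> r_disjoint X (\<U> i) (R i))
        \<and> (\<Union>i\<in>{1..k}. \<Union>U\<in>\<U> i. mspace U) = mspace X)"

definition bounded_family :: "'a metric set \<Rightarrow> bool" where
  "bounded_family \<X> \<longleftrightarrow>
     (\<exists>B::real. \<forall>X\<in>\<X>. \<forall>x\<in>mspace X. \<forall>y\<in>mspace X. mdist X x y \<le> B)"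

text \<open>The classes C_alpha, by well-founded recursion over a well-ordered type
  (an ordinal alpha is represented as an element of a well-ordered type;
  the least element plays the role of 0).\<close>
definition Cclass :: "'o::wellorder \<Rightarrow> 'a metric set set" where
  "Cclass = wfrec {(x, y). x < y}
     (\<lambda>C \<alpha>. if (\<forall>\<beta>. \<not> \<beta> < \<alpha>) then {\<X>. bounded_family \<X>}
            else {\<X>. \<forall>R::nat \<Rightarrow> real. \<exists>\<beta><\<alpha>. \<exists>\<Y>\<in>C \<beta>. fam_arrow \<X> R \<Y>})"

lemma Cclass_unfold:
  fixes \<alpha> :: "'o::wellorder"
  shows "(Cclass \<alpha> :: 'a metric set set) = (if (\<forall>\<beta>. \<not> \<beta> < \<alpha>) then {\<X>. bounded_family \<X>}
            else {\<X>. \<forall>R::nat \<Rightarrow> real. \<exists>\<beta><\<alpha>. \<exists>\<Y>\<in>Cclass \<beta>. fam_arrow \<X> R \<Y>})"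
proof -
  have c: "\<And>\<beta>. \<beta> < \<alpha> \<Longrightarrow> cut (Cclass :: 'o \<Rightarrow> 'a metric set set) {(x, y). x < y} \<alpha> \<beta> = Cclass \<beta>"
    by (simp add: cut_def)
  have e: "(Cclass \<alpha> :: 'a metric set set) = (if (\<forall>\<beta>. \<not> \<beta> < \<alpha>) then {\<X>. bounded_family \<X>}
            else {\<X>. \<forall>R::nat \<Rightarrow> real. \<exists>\<beta><\<alpha>. \<exists>\<Y>\<in>cut (Cclass :: 'o \<Rightarrow> 'a metric set set) {(x, y). x < y} \<alpha> \<beta>. fam_arrow \<X> R \<Y>})"
    unfolding Cclass_def by (subst wfrec[OF wellorder_class.wf]) simp
  have "{\<X>. \<forall>R::nat \<Rightarrow> real. \<exists>\<beta><\<alpha>. \<exists>\<Y>\<in>cut (Cclass :: 'o \<Rightarrow> 'a metric set set) {(x, y). x < y} \<alpha> \<beta>. fam_arrow \<X> R \<Y>}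
     = {\<X>. \<forall>R::nat \<Rightarrow> real. \<exists>\<beta><\<alpha>. \<exists>\<Y>\<in>Cclass \<beta>. fam_arrow \<X> R \<Y>}"
    using c by (metis (no_types, lifting))
  with e show ?thesis by simp
qed

text \<open>A map of families: a set of triples (X_f, f, Y_f).\<close>
definition family_map ::
  "('a metric \<times> ('a \<Rightarrow> 'b) \<times> 'b metric) set \<Rightarrow> 'a metric set \<Rightarrow> 'b metric set \<Rightarrow> bool" where
  "family_map F \<X> \<Y> \<longleftrightarrow>
     {X. \<exists>f Y. (X, f, Y) \<in> F} = \<X> \<and>
     (\<forall>(X, f, Y)\<in>F. Y \<in> \<Y> \<and> f ` mspace X \<subseteq> mspace Y)"

definition coarse_embedding_fam :: "('a metric \<times> ('a \<Rightarrow> 'b) \<times> 'b metric) set \<Rightarrow> bool" where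
  "coarse_embedding_fam F \<longleftrightarrow>
     (\<exists>\<rho>1 \<rho>2 :: real \<Rightarrow> real.
        mono_on {0..} \<rho>1 \<and> mono_on {0..} \<rho>2 \<and>
        (\<forall>t\<ge>0. \<rho>1 t \<ge> 0 \<and> \<rho>2 t \<ge> 0) \<and>
        (\<forall>b. bounded {t. t \<ge> 0 \<and> \<rho>1 t \<le> b}) \<and>
        (\<forall>(X, f, Y)\<in>F. \<forall>x\<in>mspace X. \<forall>x'\<in>mspace X.
           \<rho>1 (mdist X x x') \<le> mdist Y (f x) (f x') \<and>
           mdist Y (f x) (f x') \<le> \<rho>2 (mdist X x x')))"

end

theory Submission
  imports Defs
begin

lemma fm_triple:
  assumes "family_map F \<X> \<Y>" and "(X, f, Y) \<in> F"
  shows "Y \<in> \<Y>" "f ` mspace X \<subseteq> mspace Y"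
  using assms unfolding family_map_def by fastforce+

lemma base_case:
  fixes F :: "('a metric \<times> ('a \<Rightarrow> 'b) \<times> 'b metric) set"
  assumes fm: "family_map F \<X> \<Y>" and ce: "coarse_embedding_fam F" and bf: "bounded_family \<Y>"
  shows "bounded_family \<X>"
proof -
  obtain \<rho>1 \<rho>2 :: "real \<Rightarrow> real" where
    bd: "\<forall>b. bounded {t. t \<ge> 0 \<and> \<rho>1 t \<le> b}" and
    emb: "\<forall>(X, f, Y)\<in>F. \<forall>x\<in>mspace X. \<forall>x'\<in>mspace X.
           \<rho>1 (mdist X x x') \<le> mdist Y (f x) (f x') \<and>
           mdist Y (f x) (f x') \<le> \<rho>2 (mdist X x x')"
    using ce unfolding coarse_embedding_fam_def by blast
  obtain B where B: "\<forall>Y\<in>\<Y>. \<forall>x\<in>mspace Y. \<forall>y\<in>mspace Y. mdist Y x y \<le> B"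
    using bf unfolding bounded_family_def by blast
  obtain C where C: "\<forall>t\<in>{t. t \<ge> 0 \<and> \<rho>1 t \<le> B}. norm t \<le> C"
    using bd[rule_format, of B] unfolding bounded_iff by blast
  have "\<forall>X\<in>\<X>. \<forall>x\<in>mspace X. \<forall>y\<in>mspace X. mdist X x y \<le> C"
  proof (intro ballI)
    fix X x y assume X: "X \<in> \<X>" and x: "x \<in> mspace X" and y: "y \<in> mspace X"
    then obtain f Y where t: "(X, f, Y) \<in> F" using fm unfolding family_map_def by blast
    then have Y: "Y \<in> \<Y>" and im: "f ` mspace X \<subseteq> mspace Y" using fm_triple[OF fm t] by auto
    have "\<rho>1 (mdist X x y) \<le> mdist Y (f x) (f y)" using emb t x y by fastforce
    also have "\<dots> \<le> B" using B Y im x y by blast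
    finally have "mdist X x y \<in> {t. t \<ge> 0 \<and> \<rho>1 t \<le> B}" by simp
    then show "mdist X x y \<le> C" using C by fastforce
  qed
  then show ?thesis unfolding bounded_family_def by blast
qed

lemma step_case:
  fixes F :: "('a metric \<times> ('a \<Rightarrow> 'b) \<times> 'b metric) set"
    and \<rho>1 \<rho>2 :: "real \<Rightarrow> real"
  assumes fm: "family_map F \<X> \<Y>"
    and m2: "mono_on {0..} \<rho>2"
    and emb: "\<forall>(X, f, Y)\<in>F. \<forall>x\<in>mspace X. \<forall>x'\<in>mspace X.
           \<rho>1 (mdist X x x') \<le> mdist Y (f x) (f x') \<and>
           mdist Y (f x) (f x') \<le> \<rho>2 (mdist X x x')"
    and ar: "fam_arrow \<Y> (\<lambda>i. \<rho>2 (max (R i) 0)) \<Z>"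
  shows "\<exists>G W. fam_arrow \<X> R W \<and> family_map G W \<Z> \<and>
     (\<forall>(X, f, Y)\<in>G. \<forall>x\<in>mspace X. \<forall>x'\<in>mspace X.
           \<rho>1 (mdist X x x') \<le> mdist Y (f x) (f x') \<and>
           mdist Y (f x) (f x') \<le> \<rho>2 (mdist X x x'))"
proof -
  define G :: "('a metric \<times> ('a \<Rightarrow> 'b) \<times> 'b metric) set" where
    "G = {(submetric X (mspace X \<inter> f -` mspace U), f, U) | X f Y U.
            (X, f, Y) \<in> F \<and> U \<in> \<Z> \<and> is_subspace U Y}"
  define W where "W = {V. \<exists>g U. (V, g, U) \<in> G}"
  have fmG: "family_map G W \<Z>"
    unfolding family_map_def W_def G_def by auto
  have embG: "\<forall>(X, f, Y)\<in>G. \<forall>x\<in>mspace X. \<forall>x'\<in>mspace X.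
           \<rho>1 (mdist X x x') \<le> mdist Y (f x) (f x') \<and>
           mdist Y (f x) (f x') \<le> \<rho>2 (mdist X x x')"
  proof (clarify)
    fix V g U x x'
    assume "(V, g, U) \<in> G" and x: "x \<in> mspace V" and x': "x' \<in> mspace V"
    then obtain X Y where V: "V = submetric X (mspace X \<inter> g -` mspace U)"
      and t: "(X, g, Y) \<in> F" and U: "is_subspace U Y"
      unfolding G_def by blast
    obtain S where U': "U = submetric Y S" using U unfolding is_subspace_def by blast
    have xs: "x \<in> mspace X" "x' \<in> mspace X" using x x' V by auto
    show "\<rho>1 (mdist V x x') \<le> mdist U (g x) (g x') \<and> mdist U (g x) (g x') \<le> \<rho>2 (mdist V x x')"
      using emb t xs V U' by fastforce
  qed
  have "fam_arrow \<X> R W"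
  proof -
    obtain k where k: "\<forall>Y\<in>\<Y>. \<exists>\<U> :: nat \<Rightarrow> 'b metric set.
        (\<forall>i\<in>{1..k}. \<U> i \<subseteq> \<Z> \<and> (\<forall>U\<in>\<U> i. is_subspace U Y) \<and> r_disjoint Y (\<U> i) (\<rho>2 (max (R i) 0)))
        \<and> (\<Union>i\<in>{1..k}. \<Union>U\<in>\<U> i. mspace U) = mspace Y"
      using ar unfolding fam_arrow_def by blast
    have "\<forall>X\<in>\<X>. \<exists>\<V> :: nat \<Rightarrow> 'a metric set.
        (\<forall>i\<in>{1..k}. \<V> i \<subseteq> W \<and> (\<forall>V\<in>\<V> i. is_subspace V X) \<and> r_disjoint X (\<V> i) (R i))
        \<and> (\<Union>i\<in>{1..k}. \<Union>V\<in>\<V> i. mspace V) = mspace X"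
    proof
      fix X assume X: "X \<in> \<X>"
      then obtain f Y where t: "(X, f, Y) \<in> F" using fm unfolding family_map_def by blast
      then have Y: "Y \<in> \<Y>" and im: "f ` mspace X \<subseteq> mspace Y" using fm_triple[OF fm t] by auto
      obtain \<U> where U1: "\<forall>i\<in>{1..k}. \<U> i \<subseteq> \<Z> \<and> (\<forall>U\<in>\<U> i. is_subspace U Y) \<and> r_disjoint Y (\<U> i) (\<rho>2 (max (R i) 0))"
        and U2: "(\<Union>i\<in>{1..k}. \<Union>U\<in>\<U> i. mspace U) = mspace Y"
        using bspec[OF k Y] by blast
      define P where "P U = submetric X (mspace X \<inter> f -` mspace U)" for U
      define \<V> where "\<V> i = P ` \<U> i" for i
      have "\<forall>i\<in>{1..k}. \<V> i \<subseteq> W \<and> (\<forall>V\<in>\<V> i. is_subspace V X) \<and> r_disjoint X (\<V> i) (R i)"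
      proof
        fix i assume i: "i \<in> {1..k}"
        have "\<V> i \<subseteq> W"
        proof
          fix V assume "V \<in> \<V> i"
          then obtain U where U: "U \<in> \<U> i" "V = P U" unfolding \<V>_def by blast
          then have "(V, f, U) \<in> G" unfolding G_def P_def using t U1 i by blast
          then show "V \<in> W" unfolding W_def by blast
        qed
        moreover have "\<forall>V\<in>\<V> i. is_subspace V X"
          unfolding \<V>_def P_def is_subspace_def by blast
        moreover have "r_disjoint X (\<V> i) (R i)"
          unfolding r_disjoint_def
        proof (intro ballI impI)
          fix V V' x y assume V: "V \<in> \<V> i" and V': "V' \<in> \<V> i" and ne: "V \<noteq> V'"
            and x: "x \<in> mspace V" and y: "y \<in> mspace V'"
          obtain U where U: "U \<in> \<U> i" "V = P U" using V unfolding \<V>_def by blast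
          obtain U' where U': "U' \<in> \<U> i" "V' = P U'" using V' unfolding \<V>_def by blast
          have neU: "U \<noteq> U'" using ne U U' by blast
          have xs: "x \<in> mspace X" "f x \<in> mspace U" using x U unfolding P_def by auto
          have ys: "y \<in> mspace X" "f y \<in> mspace U'" using y U' unfolding P_def by auto
          have gt: "mdist Y (f x) (f y) > \<rho>2 (max (R i) 0)"
            using U1 i U(1) U'(1) neU xs ys unfolding r_disjoint_def by blast
          show "mdist X x y > R i"
          proof (rule ccontr)
            assume "\<not> R i < mdist X x y"
            then have le: "mdist X x y \<le> max (R i) 0" by simp
            have "mdist Y (f x) (f y) \<le> \<rho>2 (mdist X x y)" using emb t xs ys by fastforce
            also have "\<dots> \<le> \<rho>2 (max (R i) 0)"
              using m2 le by (intro mono_onD[OF m2]) auto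
            finally show False using gt by simp
          qed
        qed
        ultimately show "\<V> i \<subseteq> W \<and> (\<forall>V\<in>\<V> i. is_subspace V X) \<and> r_disjoint X (\<V> i) (R i)" by blast
      qed
      moreover have "(\<Union>i\<in>{1..k}. \<Union>V\<in>\<V> i. mspace V) = mspace X"
      proof
        show "(\<Union>i\<in>{1..k}. \<Union>V\<in>\<V> i. mspace V) \<subseteq> mspace X"
          unfolding \<V>_def P_def by auto
        show "mspace X \<subseteq> (\<Union>i\<in>{1..k}. \<Union>V\<in>\<V> i. mspace V)"
        proof
          fix x assume x: "x \<in> mspace X"
          then have "f x \<in> mspace Y" using im by blast
          then obtain i U where "i \<in> {1..k}" "U \<in> \<U> i" "f x \<in> mspace U" using U2 by blast
          then show "x \<in> (\<Union>i\<in>{1..k}. \<Union>V\<in>\<V> i. mspace V)"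
            unfolding \<V>_def P_def using x by force
        qed
      qed
      ultimately show "\<exists>\<V> :: nat \<Rightarrow> 'a metric set.
        (\<forall>i\<in>{1..k}. \<V> i \<subseteq> W \<and> (\<forall>V\<in>\<V> i. is_subspace V X) \<and> r_disjoint X (\<V> i) (R i))
        \<and> (\<Union>i\<in>{1..k}. \<Union>V\<in>\<V> i. mspace V) = mspace X" by blast
    qed
    then show ?thesis unfolding fam_arrow_def by blast
  qed
  then show ?thesis using fmG embG by blast
qed

lemma Cclass_min:
  fixes \<alpha> :: "'o::wellorder"
  assumes "\<forall>\<beta>. \<not> \<beta> < \<alpha>"
  shows "(\<X> \<in> (Cclass \<alpha> :: 'a metric set set)) \<longleftrightarrow> bounded_family \<X>"
  by (subst Cclass_unfold) (simp add: assms)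

lemma Cclass_nmin:
  fixes \<alpha> :: "'o::wellorder"
  assumes "\<not> (\<forall>\<beta>. \<not> \<beta> < \<alpha>)"
  shows "(\<X> \<in> (Cclass \<alpha> :: 'a metric set set)) \<longleftrightarrow>
     (\<forall>R::nat \<Rightarrow> real. \<exists>\<beta><\<alpha>. \<exists>\<Y>\<in>Cclass \<beta>. fam_arrow \<X> R \<Y>)"
  apply (subst Cclass_unfold)
  using assms by (simp only: if_False mem_Collect_eq)

lemma main_ind:
  fixes \<alpha> :: "'o::wellorder"
  shows "\<forall>(\<X> :: 'a metric set) (\<Y> :: 'b metric set) (F :: ('a metric \<times> ('a \<Rightarrow> 'b) \<times> 'b metric) set).
     family_map F \<X> \<Y> \<longrightarrow> coarse_embedding_fam F \<longrightarrow> \<Y> \<in> Cclass \<alpha> \<longrightarrow> \<X> \<in> Cclass \<alpha>"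
proof (induction \<alpha> rule: less_induct)
  case (less \<alpha>)
  show ?case
  proof (intro allI impI)
    fix \<X> :: "'a metric set" and \<Y> :: "'b metric set" and F :: "('a metric \<times> ('a \<Rightarrow> 'b) \<times> 'b metric) set"
    assume fm: "family_map F \<X> \<Y>" and ce: "coarse_embedding_fam F" and Y: "\<Y> \<in> Cclass \<alpha>"
    show "\<X> \<in> Cclass \<alpha>"
    proof (cases "\<forall>\<beta>. \<not> \<beta> < \<alpha>")
      case True
      then have "bounded_family \<Y>" using Y Cclass_min[OF True] by blast
      then have "bounded_family \<X>" using base_case fm ce by blast
      then show ?thesis using Cclass_min[OF True] by blast
    next
      case False
      obtain \<rho>1 \<rho>2 :: "real \<Rightarrow> real" where m2: "mono_on {0..} \<rho>2" and
        emb: "\<forall>(X, f, Y)\<in>F. \<forall>x\<in>mspace X. \<forall>x'\<in>mspace X.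
           \<rho>1 (mdist X x x') \<le> mdist Y (f x) (f x') \<and>
           mdist Y (f x) (f x') \<le> \<rho>2 (mdist X x x')"
        and rest: "mono_on {0..} \<rho>1 \<and> (\<forall>t\<ge>0. \<rho>1 t \<ge> 0 \<and> \<rho>2 t \<ge> 0) \<and>
          (\<forall>b. bounded {t. t \<ge> 0 \<and> \<rho>1 t \<le> b})"
        using ce unfolding coarse_embedding_fam_def by blast
      have Yc: "\<forall>R::nat \<Rightarrow> real. \<exists>\<beta><\<alpha>. \<exists>\<Z>\<in>(Cclass \<beta> :: 'b metric set set). fam_arrow \<Y> R \<Z>"
        using Y Cclass_nmin[OF False] by blast
      have "\<forall>R::nat \<Rightarrow> real. \<exists>\<beta><\<alpha>. \<exists>W\<in>(Cclass \<beta> :: 'a metric set set). fam_arrow \<X> R W"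
      proof
        fix R :: "nat \<Rightarrow> real"
        obtain \<beta> \<Z> where b: "\<beta> < \<alpha>" and Z: "\<Z> \<in> (Cclass \<beta> :: 'b metric set set)"
          and ar: "fam_arrow \<Y> (\<lambda>i. \<rho>2 (max (R i) 0)) \<Z>"
          using Yc by blast
        obtain G W where a: "fam_arrow \<X> R W" and fmG: "family_map G W \<Z>" and
          embG: "\<forall>(X, f, Y)\<in>G. \<forall>x\<in>mspace X. \<forall>x'\<in>mspace X.
           \<rho>1 (mdist X x x') \<le> mdist Y (f x) (f x') \<and>
           mdist Y (f x) (f x') \<le> \<rho>2 (mdist X x x')"
          using step_case[OF fm m2 emb ar] by blast
        have "coarse_embedding_fam G" unfolding coarse_embedding_fam_def
          using m2 rest embG by blast
        then have "W \<in> Cclass \<beta>" using less[OF b] fmG Z by blast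
        then show "\<exists>\<beta><\<alpha>. \<exists>W\<in>(Cclass \<beta> :: 'a metric set set). fam_arrow \<X> R W"
          using a b by blast
      qed
      then show ?thesis using Cclass_nmin[OF False] by blast
    qed
  qed
qed

theorem theorem3p1:
  fixes \<alpha> :: "'o::wellorder"
    and \<X> :: "'a metric set" and \<Y> :: "'b metric set"
    and F :: "('a metric \<times> ('a \<Rightarrow> 'b) \<times> 'b metric) set"
  assumes "family_map F \<X> \<Y>"
    and "coarse_embedding_fam F"
    and "\<Y> \<in> Cclass \<alpha>"
  shows "\<X> \<in> Cclass \<alpha>"
  using main_ind[of \<alpha>] assms by blast

end
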